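(* Let $p$ be an odd prime and $0\le k\le\frac{p-1}{2}$. Then $$\begin{bmatrix}\frac{p-1}{2}+k\\2k\end{bmatrix}_{q^2}\equiv(-1)^k\begin{bmatrix}2k\\k\end{bmatrix}_{q^2}\frac{q^{kp-k^2}}{(-q;q)_{2k}^2}\pmod{[p]^2}.$$
   Context: For an indeterminate $q$ and an integer $n\ge 0$: $(a;q)_0=1$ and $(a;q)_n=(1-a)(1-aq)\cdots(1-aq^{n-1})$. The $q$-binomial coefficient is $\begin{bmatrix}n\\k\end{bmatrix}_q=\frac{(q^{n-k+1};q)_k}{(q;q)_k}$ if $0\le k\le n$ and $0$ otherwise. For a positive integer $p$, $[p]=\frac{1-q^p}{1-q}=1+q+\cdots+q^{p-1}$. For a prime $p$, $[p]$ is irreducible in $\mathbb{Q}[q]$; for rational functions $A,B$ of $q$ whose denominators are coprime to $[p]$, $A\equiv B\pmod{[p]^r}$ means that $A-B$, written in lowest terms, has numerator divisible by $[p]^r$ in $\mathbb{Q}[q]$. *)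

theory Defs
  imports "HOL-Computational_Algebra.Computational_Algebra"
          "HOL-Computational_Algebra.Normalized_Fraction"
          "HOL-Computational_Algebra.Field_as_Ring"
begin

text \<open>Rational functions in the indeterminate q are elements of the fraction field of rat poly.\<close>

type_synonym ratfun = "rat poly fract"

definition qvar :: ratfun where
  "qvar = to_fract [:0, 1:]"

definition qpoch :: "'a::field \<Rightarrow> 'a \<Rightarrow> nat \<Rightarrow> 'a" where
  "qpoch a x n = (\<Prod>i<n. (1 - a * x ^ i))"

definition qbinom :: "'a::field \<Rightarrow> nat \<Rightarrow> nat \<Rightarrow> 'a" where
  "qbinom x n k = (if k \<le> n then qpoch (x ^ (n - k + 1)) x k / qpoch x x k else 0)"

definition qint :: "nat \<Rightarrow> rat poly" where
  "qint p = (\<Sum>i<p. monom 1 i)"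

definition qcong :: "nat \<Rightarrow> nat \<Rightarrow> ratfun \<Rightarrow> ratfun \<Rightarrow> bool" where
  "qcong p r A B \<longleftrightarrow>
     coprime (snd (quot_of_fract A)) (qint p) \<and>
     coprime (snd (quot_of_fract B)) (qint p) \<and>
     qint p ^ r dvd fst (quot_of_fract (A - B))"

end

theory Submission imports Defs begin

definition XX :: "rat poly" where "XX = [:0,1:]"

lemma qint_alt: "qint p = (\<Sum>i<p. XX^i)"
  by (simp add: qint_def monom_altdef XX_def)

lemma one_minus_pow_qint: "1 - XX^p = (1 - XX) * qint p"
  by (simp add: qint_alt one_diff_power_eq)

lemma one_minus_pow_dvd: "(1 - (y::'a::comm_ring_1)) dvd (1 - y^n)"
  by (metis dvd_triv_left one_diff_power_eq)

lemma aux1: "(1 - a * b) - a * (1 - b) = 1 - (a::'a::comm_ring_1)" by (simp add: algebra_simps)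

lemma cop_key:
  assumes p: "prime p" and nd: "\<not> p dvd j"
  shows "coprime (1 - XX^j) (qint p)"
proof (rule coprimeI)
  fix d assume d1: "d dvd 1 - XX^j" and d2: "d dvd qint p"
  have j0: "j \<noteq> 0" using nd by (metis dvd_0_right)
  obtain e u v where e: "e dvd j" "e dvd p" "j * u = p * v + e"
    using bezout_add_strong_nat[OF j0, of p] by blast
  have "e = 1" using e nd p by (metis prime_nat_iff)
  with e have juv: "j * u = p * v + 1" by simp
  have "d dvd 1 - (XX^j)^u" using d1 one_minus_pow_dvd dvd_trans by blast
  also have "(XX^j)^u = XX * XX^(p*v)" by (metis power_mult juv power_Suc Suc_eq_plus1)
  finally have da: "d dvd 1 - XX * XX^(p*v)" .
  have "d dvd 1 - XX^p" using d2 one_minus_pow_qint by (metis dvd_mult2 mult.commute)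
  hence "d dvd 1 - (XX^p)^v" using one_minus_pow_dvd dvd_trans by blast
  hence "d dvd 1 - XX^(p*v)" by (metis power_mult)
  hence db: "d dvd XX * (1 - XX^(p*v))" by (rule dvd_mult)
  have "d dvd (1 - XX * XX^(p*v)) - XX * (1 - XX^(p*v))" using da db by (rule dvd_diff)
  also have "(1 - XX * XX^(p*v)) - XX * (1 - XX^(p*v)) = 1 - XX" by (rule aux1)
  finally have dX: "d dvd 1 - XX" .
  have "qint p - (\<Sum>i<p. 1) = (\<Sum>i<p. XX^i - 1)"
    by (simp only: qint_alt sum_subtractf)
  also have "\<dots> = (\<Sum>i<p. (XX - 1) * (\<Sum>l<i. XX^l))"
    by (rule sum.cong[OF refl], rule power_diff_1_eq)
  also have "\<dots> = (XX - 1) * (\<Sum>i<p. (\<Sum>l<i. XX^l))"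
    by (rule sum_distrib_left[symmetric])
  finally have eqS: "qint p - (\<Sum>i<p. 1) = (XX - 1) * (\<Sum>i<p. (\<Sum>l<i. XX^l))" .
  have "d dvd XX - 1" using dX by (metis dvd_minus_iff minus_diff_eq)
  hence "d dvd (XX - 1) * (\<Sum>i<p. (\<Sum>l<i. XX^l))" by (rule dvd_mult2)
  hence "d dvd qint p - (\<Sum>i<p. 1)" by (simp only: eqS)
  hence "d dvd qint p - (qint p - (\<Sum>i<p. 1))" using d2 dvd_diff by blast
  hence "d dvd (\<Sum>i<p. 1)" by simp
  also have "(\<Sum>i<p. 1) = [:of_nat p:]" by (simp add: of_nat_poly)
  finally have "d dvd [:of_nat p:]" .
  moreover have "is_unit [:(of_nat p :: rat):]" using prime_gt_0_nat[OF p] by (simp add: is_unit_const_poly_iff dvd_field_iff)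
  ultimately show "is_unit d" using dvd_unit_imp_unit by blast
qed


lemma frac_cop:
  assumes "Y * to_fract D = to_fract N" "D \<noteq> 0" "coprime D P"
  shows "coprime (snd (quot_of_fract Y)) P"
proof -
  define a b where "a = fst (quot_of_fract Y)" and "b = snd (quot_of_fract Y)"
  have b0: "b \<noteq> 0" by (simp add: b_def)
  have cab: "coprime a b" unfolding a_def b_def by (rule coprime_quot_of_fract)
  have "Y = to_fract a / to_fract b" unfolding a_def b_def
    by (metis Fract_conv_to_fract Fract_quot_of_fract)
  with assms(1) have "to_fract a * to_fract D = to_fract N * to_fract b"
    using b0 by (simp add: field_simps)
  hence eq: "a * D = N * b" by (metis to_fract_eq_iff to_fract_mult)
  have "b dvd a * D" by (simp add: eq)
  hence "b dvd D" using cab by (metis coprime_commute coprime_dvd_mult_right_iff mult.commute)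
  hence "coprime b P" using assms(3) by (meson coprime_divisors dvd_refl)
  thus ?thesis by (simp add: b_def)
qed

lemma frac_dvd:
  assumes "Y * to_fract D = to_fract N" "D \<noteq> 0" "coprime D P" "P dvd N"
  shows "P dvd fst (quot_of_fract Y)"
proof -
  define a b where "a = fst (quot_of_fract Y)" and "b = snd (quot_of_fract Y)"
  have b0: "b \<noteq> 0" by (simp add: b_def)
  have "Y = to_fract a / to_fract b" unfolding a_def b_def
    by (metis Fract_conv_to_fract Fract_quot_of_fract)
  with assms(1) have "to_fract a * to_fract D = to_fract N * to_fract b"
    using b0 by (simp add: field_simps)
  hence eq: "a * D = N * b" by (metis to_fract_eq_iff to_fract_mult)
  have "P dvd a * D" using assms(4) by (simp add: eq)
  hence "P dvd a" using assms(3) by (metis coprime_commute coprime_dvd_mult_left_iff)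
  thus ?thesis by (simp add: a_def)
qed

definition Hp :: "nat \<Rightarrow> nat \<Rightarrow> rat poly" where
  "Hp a m = (\<Prod>i<m. 1 - XX^(a+2*i))"

definition Cp :: "nat \<Rightarrow> rat poly" where
  "Cp k = (\<Prod>i<2*k. 1 + XX^(i+1))"

lemma Hp_0 [simp]: "Hp a 0 = 1" by (simp add: Hp_def)
lemma Cp_0 [simp]: "Cp 0 = 1" by (simp add: Cp_def)

lemma Hp_Suc: "Hp a (Suc m) = Hp a m * (1 - XX^(a+2*m))"
  by (simp add: Hp_def)

lemma Hp_shift: "Hp a (Suc m) = (1 - XX^a) * Hp (a+2) m"
  unfolding Hp_def prod.lessThan_Suc_shift by (simp add: add.assoc)

lemma Hp_add: "Hp a (m+l) = Hp a m * Hp (a+2*m) l"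
  by (induct l) (simp_all add: Hp_Suc add.assoc algebra_simps)

lemma Cp_Suc: "Cp (Suc k) = Cp k * (1 + XX^(2*k+1)) * (1 + XX^(2*k+2))"
  by (simp add: Cp_def)

lemma poly_XX [simp]: "poly XX x = x" by (simp add: XX_def)

lemma one_minus_XX_nz: "j > 0 \<Longrightarrow> 1 - XX^j \<noteq> 0"
proof
  assume "j > 0" "1 - XX^j = 0"
  hence "poly (1 - XX^j) 0 = 0" by simp
  thus False using \<open>j > 0\<close> by (simp add: zero_power)
qed

lemma one_plus_XX_nz: "j > 0 \<Longrightarrow> 1 + XX^j \<noteq> 0"
proof
  assume "j > 0" "1 + XX^j = 0"
  hence "poly (1 + XX^j) 0 = 0" by simp
  thus False using \<open>j > 0\<close> by (simp add: zero_power)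
qed

lemma sq_aux: "(1 - y) * (1 + y) = 1 - y * (y::'a::comm_ring_1)"
  by (simp add: algebra_simps)

lemma XX_double: "XX^(2*j) = XX^j * XX^j"
  by (simp add: mult_2 power_add)

lemma G_eq: "Hp (2*k+2) k = Hp 1 k * Cp k"
proof (induct k)
  case 0 then show ?case by simp
next
  case (Suc k)
  have nz: "1 - XX^(2*k+2) \<noteq> 0" by (rule one_minus_XX_nz) simp
  have "(1 - XX^(2*k+2)) * Hp (2*Suc k+2) (Suc k) = Hp (2*k+2) (Suc (Suc k))"
    by (simp add: Hp_shift)
  also have "\<dots> = Hp (2*k+2) k * (1 - XX^(2*(2*k+1))) * (1 - XX^(2*(2*k+2)))"
    by (simp add: Hp_Suc algebra_simps)
  also have "\<dots> = Hp 1 k * Cp k * (1 - XX^(2*k+1) * XX^(2*k+1)) * (1 - XX^(2*k+2) * XX^(2*k+2))"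
    by (simp only: Suc XX_double)
  also have "\<dots> = (1 - XX^(2*k+2)) * (Hp 1 (Suc k) * Cp (Suc k))"
    by (simp only: Hp_Suc Cp_Suc sq_aux[symmetric]) (simp add: algebra_simps)
  finally show ?case using nz by simp
qed

lemma key_ident:
  fixes a b :: "'a::comm_ring_1"
  shows "(1 - a) * (1 - a * (b * b)) - (- a * ((1 - b) * (1 - b))) = (1 - a * b) * (1 - a * b)"
  by (simp add: algebra_simps)

lemma step_ident:
  fixes F F' N R :: "'a::comm_ring_1"
  shows "F * N - F' * R = F * (N - R) + (F - F') * R"
  by (simp add: algebra_simps)

lemma exp_e4:
  assumes "p = 2*n+1" "Suc k \<le> n"
  shows "Suc k * (p - Suc k) = 2*(n-k) + k*(p-k)"
proof -
  obtain t where t: "n = Suc k + t" using assms(2) le_Suc_ex by blast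
  show ?thesis using assms(1) unfolding t by (simp add: algebra_simps)
qed

lemma main_cong:
  assumes p: "p = 2*n+1"
  shows "k \<le> n \<Longrightarrow> qint p ^ 2 dvd Hp (2*(n-k+1)) (2*k) - (-1)^k * XX^(k*(p-k)) * (Hp 1 k)^2"
proof (induct k)
  case 0 then show ?case by simp
next
  case (Suc k)
  hence kn: "Suc k \<le> n" by simp
  hence IH: "qint p ^ 2 dvd Hp (2*(n-k+1)) (2*k) - (-1)^k * XX^(k*(p-k)) * (Hp 1 k)^2"
    using Suc by simp
  define a where "a = XX^(2*(n-k))"
  define b where "b = XX^(2*k+1)"
  define N where "N = Hp (2*(n-k+1)) (2*k)"
  define R where "R = (-1)^k * XX^(k*(p-k)) * (Hp 1 k)^2"
  define F where "F = (1 - a) * (1 - a * (b * b))"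
  define F' where "F' = - a * ((1 - b) * (1 - b))"
  have e1: "2*(n - Suc k + 1) = 2*(n-k)" using kn by simp
  have e2: "2*(n-k) + 2 = 2*(n-k+1)" using kn by simp
  have "Hp (2*(n - Suc k + 1)) (2*Suc k) = Hp (2*(n-k)) (Suc (Suc (2*k)))"
    by (simp only: e1) simp
  also have "\<dots> = (1 - a) * (N * (1 - XX^(2*(n-k) + 2 + 2*(2*k))))"
    by (simp only: Hp_shift[of _ "Suc (2*k)"] Hp_Suc[of _ "2*k"] e2 a_def N_def)
  also have "XX^(2*(n-k) + 2 + 2*(2*k)) = a * (b * b)"
    by (simp add: a_def b_def power_add[symmetric] algebra_simps)
  finally have NA: "Hp (2*(n - Suc k + 1)) (2*Suc k) = F * N"
    by (simp add: F_def algebra_simps)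
  have "(-1::rat poly)^(Suc k) * XX^(Suc k*(p-Suc k)) * (Hp 1 (Suc k))^2
      = (-1)^(Suc k) * XX^(2*(n-k) + k*(p-k)) * (Hp 1 k * (1 - XX^(1+2*k)))^2"
    by (simp only: exp_e4[OF p kn] Hp_Suc)
  also have "\<dots> = F' * R"
    by (simp add: F'_def R_def a_def b_def power_add algebra_simps power2_eq_square)
  finally have RA: "(-1::rat poly)^(Suc k) * XX^(Suc k*(p-Suc k)) * (Hp 1 (Suc k))^2 = F' * R" .
  have FF: "F - F' = (1 - XX^p) * (1 - XX^p)"
  proof -
    have e5: "2*(n-k) + (2*k+1) = p" using kn p by simp
    have "a * b = XX^p" by (simp only: a_def b_def power_add[symmetric] e5)
    thus ?thesis unfolding F_def F'_def using key_ident[of a b] by simp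
  qed
  have "qint p ^ 2 dvd (1 - XX^p) * (1 - XX^p)"
    by (simp add: one_minus_pow_qint power2_eq_square algebra_simps)
  hence d2: "qint p ^ 2 dvd (F - F') * R" by (simp add: FF)
  have d1: "qint p ^ 2 dvd F * (N - R)" using IH by (simp add: N_def R_def)
  have "qint p ^ 2 dvd F * N - F' * R" unfolding step_ident using d1 d2 by (rule dvd_add)
  thus ?case by (simp only: NA RA)
qed

lemma to_fract_prod: "to_fract (prod f A) = prod (\<lambda>x. to_fract (f x)) A"
  by (cases "finite A", induction A rule: finite_induct) simp_all

lemma to_fract_power: "to_fract (x ^ n) = to_fract x ^ n"
  by (induct n) simp_all

lemma qvar_XX: "qvar = to_fract XX" by (simp add: qvar_def XX_def)

lemma qpoch_Hp: "qpoch ((qvar^2)^c) (qvar^2) m = to_fract (Hp (2*c) m)"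
  unfolding qpoch_def Hp_def to_fract_prod
proof (rule prod.cong[OF refl])
  fix i
  have "(qvar^2)^c * (qvar^2)^i = qvar^(2*c+2*i)"
    by (simp only: power_mult[symmetric] power_add)
  thus "1 - (qvar^2)^c * (qvar^2)^i = to_fract (1 - XX ^ (2*c + 2*i))"
    by (simp add: to_fract_power qvar_XX)
qed

lemma qpoch_Cp: "qpoch (-qvar) qvar (2*k) = to_fract (Cp k)"
  unfolding qpoch_def Cp_def to_fract_prod
  by (rule prod.cong[OF refl]) (simp add: to_fract_power qvar_XX)

lemma nd_lt: "0 < j \<Longrightarrow> j < p \<Longrightarrow> \<not> p dvd (j::nat)"
  using nat_dvd_not_less by blast

lemma Hp_nz: "a > 0 \<Longrightarrow> Hp a m \<noteq> 0"
proof
  assume a: "a > 0" and "Hp a m = 0"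
  then obtain i where "1 - XX^(a+2*i) = 0"
    unfolding Hp_def prod_zero_iff[OF finite_lessThan] by blast
  thus False using one_minus_XX_nz[of "a+2*i"] a by simp
qed

lemma Cp_nz: "Cp k \<noteq> 0"
proof
  assume "Cp k = 0"
  then obtain i where "1 + XX^(i+1) = 0"
    unfolding Cp_def prod_zero_iff[OF finite_lessThan] by blast
  thus False using one_plus_XX_nz[of "i+1"] by simp
qed

lemma cop_Hp:
  assumes "prime p" "a > 0" "a + 2*m \<le> p + 1"
  shows "coprime (Hp a m) (qint p)"
  unfolding Hp_def
proof (rule prod_coprime_left)
  fix i assume "i \<in> {..<m}"
  hence "0 < a + 2*i" "a + 2*i < p" using assms by auto
  thus "coprime (1 - XX ^ (a + 2 * i)) (qint p)"
    by (rule cop_key[OF assms(1) nd_lt])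
qed

lemma cop_Cp:
  assumes "prime p" "odd p" "2*k < p"
  shows "coprime (Cp k) (qint p)"
  unfolding Cp_def
proof (rule prod_coprime_left)
  fix i assume "i \<in> {..<2*k}"
  hence j: "0 < i+1" "i + 1 < p" using assms by auto
  have "\<not> p dvd 2*(i+1)"
  proof
    assume "p dvd 2*(i+1)"
    hence "p dvd 2 \<or> p dvd (i+1)" using assms(1) prime_dvd_mult_iff by blast
    moreover have "\<not> p dvd 2"
    proof
      assume "p dvd 2"
      hence "p \<le> 2" by (simp add: dvd_imp_le)
      hence "p = 2" using prime_ge_2_nat[OF assms(1)] by simp
      thus False using assms(2) by simp
    qed
    ultimately show False using nd_lt[OF j] by blast
  qed
  hence c: "coprime (1 - XX^(2*(i+1))) (qint p)" by (rule cop_key[OF assms(1)])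
  have "(1 + XX^(i+1)) dvd (1 - XX^(2*(i+1)))"
    by (metis XX_double sq_aux dvd_triv_right)
  thus "coprime (1 + XX ^ (i + 1)) (qint p)" using c by (meson coprime_divisors dvd_refl)
qed

theorem lemma3p1:
  fixes p k :: nat
  assumes "prime p" and "odd p" and "k \<le> (p - 1) div 2"
  shows "qcong p 2
           (qbinom (qvar ^ 2) ((p - 1) div 2 + k) (2 * k))
           ((-1) ^ k * qbinom (qvar ^ 2) (2 * k) k * qvar ^ (k * p - k ^ 2)
              / (qpoch (- qvar) qvar (2 * k)) ^ 2)"
proof -
  define n where "n = (p - 1) div 2"
  have p: "p = 2*n+1" using assms(2) unfolding n_def by presburger
  have kn: "k \<le> n" using assms(3) by (simp add: n_def)
  define E where "E = Hp 2 k"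
  define Od where "Od = Hp 1 k"
  define C where "C = Cp k"
  define N1 where "N1 = Hp (2*(n-k+1)) (2*k)"
  define e where "e = k*(p-k)"
  define R where "R = (-1)^k * XX^e * Od^2"
  define A where "A = qbinom (qvar ^ 2) (n + k) (2 * k)"
  define B where "B = (-1) ^ k * qbinom (qvar ^ 2) (2 * k) k * qvar ^ (k * p - k ^ 2)
              / (qpoch (- qvar) qvar (2 * k)) ^ 2"
  have Enz: "E \<noteq> 0" unfolding E_def by (rule Hp_nz) simp
  have Odnz: "Od \<noteq> 0" unfolding Od_def by (rule Hp_nz) simp
  have Cnz: "C \<noteq> 0" unfolding C_def by (rule Cp_nz)
  have qA1: "qpoch (qvar^2) (qvar^2) m = to_fract (Hp 2 m)" for m
    using qpoch_Hp[of 1 m] by simp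
  have H2: "Hp 2 (2*k) = E * (Od * C)"
  proof -
    have "Hp 2 (2*k) = Hp 2 (k+k)" by (simp add: mult_2)
    also have "\<dots> = E * Hp (2*k+2) k" by (simp add: Hp_add E_def add.commute)
    finally show ?thesis by (simp only: G_eq Od_def C_def)
  qed
  have Aeq: "A = to_fract N1 / to_fract (E * (Od * C))"
  proof -
    have "A = qpoch ((qvar^2)^(n-k+1)) (qvar^2) (2*k) / qpoch (qvar^2) (qvar^2) (2*k)"
      unfolding A_def qbinom_def using kn by (simp add: Suc_diff_le)
    thus ?thesis by (simp only: qpoch_Hp qA1 N1_def H2)
  qed
  have B1: "qbinom (qvar ^ 2) (2 * k) k = to_fract (Od * C) / to_fract E"
  proof -
    have "qbinom (qvar ^ 2) (2 * k) k = qpoch ((qvar^2)^(k+1)) (qvar^2) k / qpoch (qvar^2) (qvar^2) k"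
      unfolding qbinom_def by simp
    also have "\<dots> = to_fract (Hp (2*k+2) k) / to_fract (Hp 2 k)"
      by (simp only: qpoch_Hp qA1 mult_2 add_mult_distrib2 mult_1_right)
    finally show ?thesis by (simp only: G_eq Od_def C_def E_def)
  qed
  have ee: "k * p - k ^ 2 = e" by (simp add: e_def power2_eq_square diff_mult_distrib2)
  have Beq: "B = (-1)^k * (to_fract (Od * C) / to_fract E) * to_fract XX ^ e / to_fract C ^ 2"
    unfolding B_def B1 ee qpoch_Cp by (simp only: qvar_XX C_def)
  have tnz: "to_fract E \<noteq> 0" "to_fract Od \<noteq> 0" "to_fract C \<noteq> 0" using Enz Odnz Cnz by simp_all
  have hA: "A * to_fract (E * (Od * C)) = to_fract N1"
    using tnz by (simp add: Aeq)
  have hB: "B * to_fract (E * C) = to_fract ((-1)^k * XX^e * Od)"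
    using tnz by (simp add: Beq to_fract_power field_simps power2_eq_square)
  have hAB: "(A - B) * to_fract (E * (Od * C)) = to_fract (N1 - R)"
    using tnz by (simp add: Aeq Beq R_def to_fract_power field_simps power2_eq_square)
  have cE: "coprime E (qint p)" unfolding E_def by (rule cop_Hp[OF assms(1)]) (use p kn in auto)
  have cOd: "coprime Od (qint p)" unfolding Od_def by (rule cop_Hp[OF assms(1)]) (use p kn in auto)
  have cC: "coprime C (qint p)" unfolding C_def by (rule cop_Cp[OF assms(1,2)]) (use p kn in auto)
  have D1nz: "E * (Od * C) \<noteq> 0" using Enz Odnz Cnz by simp
  have D2nz: "E * C \<noteq> 0" using Enz Cnz by simp
  have cD1: "coprime (E * (Od * C)) (qint p)" using cE cOd cC by simp
  have cD1': "coprime (E * (Od * C)) (qint p ^ 2)" using cD1 by simp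
  have cD2: "coprime (E * C) (qint p)" using cE cC by simp
  have dv: "qint p ^ 2 dvd N1 - R"
    using main_cong[OF p kn] by (simp add: N1_def R_def e_def Od_def)
  have "coprime (snd (quot_of_fract A)) (qint p)" by (rule frac_cop[OF hA D1nz cD1])
  moreover have "coprime (snd (quot_of_fract B)) (qint p)" by (rule frac_cop[OF hB D2nz cD2])
  moreover have "qint p ^ 2 dvd fst (quot_of_fract (A - B))" by (rule frac_dvd[OF hAB D1nz cD1' dv])
  ultimately show ?thesis unfolding qcong_def A_def B_def n_def by blast
qed

end
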